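(* Let $p$ be a prime, $e\ge1$, $q=p^e$, $0\le\ell\le e-1$, and let $a\in\mathbb{F}_q$, $a\ne0$. Let $M$ be the $n\times n$ matrix whose columns $\varphi_1,\dots,\varphi_n\in\mathbb{F}_q^n$ form an $\ell$-Galois $(a,0,a)$-equiangular tight frame for $\mathbb{F}_q^n$, and let $G_0=[I_n\mid M]$. Let $\mathcal{C}\subseteq\mathbb{F}_q^{2n}$ be the linear code generated by the rows of $G_0$. If $a=-1$, then $\mathcal{C}$ is an $\ell$-Galois self-dual code, and if $a\neq-1$, then $\mathcal{C}$ is an $\ell$-Galois LCD code.
   Context: For vectors $\mathbf{x},\mathbf{y}$ of length $N$, $(\mathbf{x},\mathbf{y})_\ell=\sum_{i=1}^N x_i^{p^\ell}y_i$. For a matrix $\Phi$, $\Phi^{\dagger_\ell}$ is the transpose of the matrix obtained by raising each entry to the power $p^\ell$. Vectors $\varphi_1,\dots,\varphi_m\in\mathbb{F}_q^n$ with matrix $\Phi$ (columns $\varphi_i$) form an $\ell$-Galois $(a,b,c)$-equiangular tight frame if they span $\mathbb{F}_q^n$, $\Phi\Phi^{\dagger_\ell}=cI_n$, $(\varphi_i,\varphi_i)_\ell=a$ for all $i$, and $(\varphi_i,\varphi_j)_\ell(\varphi_j,\varphi_i)_\ell=b$ for all $i\neq j$. The $\ell$-Galois inner product is $\langle\mathbf{x},\mathbf{y}\rangle_\ell=\sum_i x_iy_i^{p^\ell}$; the $\ell$-Galois dual of a linear code $\mathcal{C}$ is $\mathcal{C}^{\perp_\ell}=\{\mathbf{x}:\langle\mathbf{x},\mathbf{c}\rangle_\ell=0\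 \forall\mathbf{c}\in\mathcal{C}\}$; $\mathcal{C}$ is $\ell$-Galois self-dual if $\mathcal{C}=\mathcal{C}^{\perp_\ell}$ and $\ell$-Galois LCD if $\mathcal{C}\cap\mathcal{C}^{\perp_\ell}=\{\mathbf{0}\}$. *)

theory Defs
  imports "HOL-Computational_Algebra.Primes"
begin

(* Vectors of F_q^N are represented as functions nat => 'a that vanish at indices >= N
   (coordinates are indexed 0..N-1). Matrices are functions nat => nat => 'a,
   entry (i,j) = row i, column j. *)

definition vecs :: "nat \<Rightarrow> (nat \<Rightarrow> 'a::zero) set" where
  "vecs N = {x. \<forall>i\<ge>N. x i = 0}"

definition frame_ip :: "nat \<Rightarrow> nat \<Rightarrow> nat \<Rightarrow> (nat \<Rightarrow> 'a::field) \<Rightarrow> (nat \<Rightarrow> 'a) \<Rightarrow> 'a" where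
  "frame_ip p l N x y = (\<Sum>i<N. x i ^ (p ^ l) * y i)"

definition galois_ip :: "nat \<Rightarrow> nat \<Rightarrow> nat \<Rightarrow> (nat \<Rightarrow> 'a::field) \<Rightarrow> (nat \<Rightarrow> 'a) \<Rightarrow> 'a" where
  "galois_ip p l N x y = (\<Sum>i<N. x i * y i ^ (p ^ l))"

definition col :: "nat \<Rightarrow> (nat \<Rightarrow> nat \<Rightarrow> 'a::zero) \<Rightarrow> nat \<Rightarrow> (nat \<Rightarrow> 'a)" where
  "col n Phi j = (\<lambda>i. if i < n then Phi i j else 0)"

definition galois_etf ::
  "nat \<Rightarrow> nat \<Rightarrow> nat \<Rightarrow> nat \<Rightarrow> (nat \<Rightarrow> nat \<Rightarrow> 'a::field) \<Rightarrow> 'a \<Rightarrow> 'a \<Rightarrow> 'a \<Rightarrow> bool" where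
  "galois_etf p l n m Phi a b c \<longleftrightarrow>
     (\<forall>x\<in>vecs n. \<exists>t::nat \<Rightarrow> 'a. \<forall>i<n. x i = (\<Sum>j<m. t j * Phi i j)) \<and>
     (\<forall>i<n. \<forall>k<n. (\<Sum>j<m. Phi i j * Phi k j ^ (p ^ l)) = (if i = k then c else 0)) \<and>
     (\<forall>i<m. frame_ip p l n (col n Phi i) (col n Phi i) = a) \<and>
     (\<forall>i<m. \<forall>j<m. i \<noteq> j \<longrightarrow>
        frame_ip p l n (col n Phi i) (col n Phi j) * frame_ip p l n (col n Phi j) (col n Phi i) = b)"

definition gen0 :: "nat \<Rightarrow> (nat \<Rightarrow> nat \<Rightarrow> 'a::{zero,one}) \<Rightarrow> nat \<Rightarrow> nat \<Rightarrow> 'a" where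
  "gen0 n M i j = (if j < n then (if i = j then 1 else 0)
                   else if j < 2 * n then M i (j - n) else 0)"

definition row_code :: "nat \<Rightarrow> nat \<Rightarrow> (nat \<Rightarrow> nat \<Rightarrow> 'a::field) \<Rightarrow> (nat \<Rightarrow> 'a) set" where
  "row_code k N G = {x \<in> vecs N. \<exists>t::nat \<Rightarrow> 'a. \<forall>j<N. x j = (\<Sum>i<k. t i * G i j)}"

definition galois_dual :: "nat \<Rightarrow> nat \<Rightarrow> nat \<Rightarrow> (nat \<Rightarrow> 'a::field) set \<Rightarrow> (nat \<Rightarrow> 'a) set" where
  "galois_dual p l N C = {x \<in> vecs N. \<forall>c\<in>C. galois_ip p l N x c = 0}"

definition galois_self_dual :: "nat \<Rightarrow> nat \<Rightarrow> nat \<Rightarrow> (nat \<Rightarrow> 'a::field) set \<Rightarrow> bool" where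
  "galois_self_dual p l N C \<longleftrightarrow> C = galois_dual p l N C"

definition galois_LCD :: "nat \<Rightarrow> nat \<Rightarrow> nat \<Rightarrow> (nat \<Rightarrow> 'a::field) set \<Rightarrow> bool" where
  "galois_LCD p l N C \<longleftrightarrow> C \<inter> galois_dual p l N C = {\<lambda>_. 0}"

end

theory Submission
  imports Defs "HOL-Number_Theory.Residues" "Jordan_Normal_Form.Determinant"
begin

lemma split_sum_2n:
  fixes f :: "nat \<Rightarrow> 'b::comm_monoid_add"
  shows "sum f {..<n+m} = sum f {..<n} + (\<Sum>j<m. f (n+j))"
  by (induction m) (simp_all add: add.assoc)

lemma split_sum_2n':
  fixes f :: "nat \<Rightarrow> 'b::comm_monoid_add"
  shows "sum f {..<2*n} = sum f {..<n} + (\<Sum>j<n. f (n+j))"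
  using split_sum_2n[of f n n] by (simp add: mult_2)

lemma code_char:
  fixes M :: "nat \<Rightarrow> nat \<Rightarrow> 'a::field"
  shows "x \<in> row_code n (2*n) (gen0 n M) \<longleftrightarrow>
     x \<in> vecs (2*n) \<and> (\<forall>j<n. x (n+j) = (\<Sum>i<n. x i * M i j))"
proof
  assume "x \<in> row_code n (2*n) (gen0 n M)"
  then obtain t where x: "x \<in> vecs (2*n)" and t: "\<forall>j<2*n. x j = (\<Sum>i<n. t i * gen0 n M i j)"
    unfolding row_code_def by blast
  have xt: "x j = t j" if "j < n" for j
  proof -
    have "x j = (\<Sum>i<n. t i * (if i = j then 1 else 0))"
      using t that by (auto simp: gen0_def intro!: sum.cong)
    also have "\<dots> = t j" using that by (simp add: if_distrib sum.delta cong: if_cong)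
    finally show ?thesis .
  qed
  have "x (n+j) = (\<Sum>i<n. x i * M i j)" if "j < n" for j
  proof -
    have "x (n+j) = (\<Sum>i<n. t i * gen0 n M i (n+j))" using t that by auto
    also have "\<dots> = (\<Sum>i<n. x i * M i j)" using that xt by (auto simp: gen0_def intro!: sum.cong)
    finally show ?thesis .
  qed
  with x show "x \<in> vecs (2*n) \<and> (\<forall>j<n. x (n+j) = (\<Sum>i<n. x i * M i j))" by blast
next
  assume A: "x \<in> vecs (2*n) \<and> (\<forall>j<n. x (n+j) = (\<Sum>i<n. x i * M i j))"
  have "\<forall>j<2*n. x j = (\<Sum>i<n. x i * gen0 n M i j)"
  proof (intro allI impI)
    fix j assume j: "j < 2*n"
    show "x j = (\<Sum>i<n. x i * gen0 n M i j)"
    proof (cases "j < n")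
      case True
      have "(\<Sum>i<n. x i * gen0 n M i j) = (\<Sum>i<n. x i * (if i = j then 1 else 0))"
        using True by (auto simp: gen0_def intro!: sum.cong)
      also have "\<dots> = x j" using True by (simp add: if_distrib sum.delta cong: if_cong)
      finally show ?thesis by simp
    next
      case False
      then obtain k where k: "j = n + k" "k < n" using j
        by (metis add_diff_inverse_nat mult_2 nat_add_left_cancel_less)
      have "(\<Sum>i<n. x i * gen0 n M i j) = (\<Sum>i<n. x i * M i k)"
        using k by (auto simp: gen0_def intro!: sum.cong)
      then show ?thesis using A k by simp
    qed
  qed
  then show "x \<in> row_code n (2*n) (gen0 n M)" using A unfolding row_code_def by blast
qed

lemma ip_row:
  fixes M :: "nat \<Rightarrow> nat \<Rightarrow> 'a::field"
  assumes "P > 0" "k < n"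
  shows "(\<Sum>j<2*n. x j * gen0 n M k j ^ P) = x k + (\<Sum>j<n. x (n+j) * M k j ^ P)"
proof -
  have "(\<Sum>j<n. x j * gen0 n M k j ^ P) = (\<Sum>j<n. x j * (if k = j then 1 else 0))"
    using assms by (auto simp: gen0_def intro!: sum.cong)
  also have "\<dots> = x k" using assms by (simp add: if_distrib sum.delta cong: if_cong)
  finally have 1: "(\<Sum>j<n. x j * gen0 n M k j ^ P) = x k" .
  have 2: "(\<Sum>j<n. x (n+j) * gen0 n M k (n+j) ^ P) = (\<Sum>j<n. x (n+j) * M k j ^ P)"
    by (auto simp: gen0_def intro!: sum.cong)
  show ?thesis using 1 2 split_sum_2n'[of "\<lambda>j. x j * gen0 n M k j ^ P" n] by simp
qed


lemma left_inv:
  fixes M :: "nat \<Rightarrow> nat \<Rightarrow> 'a::field"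
  assumes a: "a \<noteq> 0"
    and R: "\<forall>i<n. \<forall>k<n. (\<Sum>j<n. M i j * M k j ^ P) = (if i = k then a else 0)"
  shows "\<forall>j'<n. \<forall>j<n. (\<Sum>i<n. M i j' ^ P * M i j) = (if j' = j then a else 0)"
proof -
  define A where "A = mat n n (\<lambda>(i,j). M i j)"
  define B where "B = mat n n (\<lambda>(j,k). M k j ^ P / a)"
  have Ac: "A \<in> carrier_mat n n" and Bc: "B \<in> carrier_mat n n" by (auto simp: A_def B_def)
  have "A * B = 1\<^sub>m n"
  proof (rule eq_matI)
    fix i k assume i: "i < dim_row (1\<^sub>m n :: 'a mat)" and k: "k < dim_col (1\<^sub>m n :: 'a mat)"
    then have "(A * B) $$ (i,k) = (\<Sum>j<n. M i j * (M k j ^ P / a))"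
      by (simp add: A_def B_def scalar_prod_def atLeast0LessThan)
    also have "\<dots> = (\<Sum>j<n. M i j * M k j ^ P) / a" by (simp add: sum_divide_distrib)
    also have "\<dots> = (1\<^sub>m n :: 'a mat) $$ (i,k)" using R i k a by simp
    finally show "(A * B) $$ (i,k) = (1\<^sub>m n :: 'a mat) $$ (i,k)" .
  qed (auto simp: A_def B_def)
  then have BA: "B * A = 1\<^sub>m n" using mat_mult_left_right_inverse[OF Ac Bc] by blast
  show ?thesis
  proof (intro allI impI)
    fix j' j assume j': "j' < n" and j: "j < n"
    have "(B * A) $$ (j',j) = (\<Sum>i<n. M i j' ^ P / a * M i j)"
      using j j' by (simp add: A_def B_def scalar_prod_def atLeast0LessThan)
    also have "\<dots> = (\<Sum>i<n. M i j' ^ P * M i j) / a" by (simp add: sum_divide_distrib)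
    finally have "(\<Sum>i<n. M i j' ^ P * M i j) / a = (if j' = j then 1 else 0)"
      using BA j j' by simp
    then show "(\<Sum>i<n. M i j' ^ P * M i j) = (if j' = j then a else 0)"
      using a by (auto simp: field_simps split: if_splits)
  qed
qed

lemma char_is_p:
  assumes "prime p" "e \<ge> 1" "card (UNIV :: 'a::{finite,field} set) = p ^ e"
  shows "CHAR('a) = p"
proof -
  have "CHAR('a) dvd p ^ e" using CHAR_dvd_CARD[where 'a='a] assms by simp
  moreover have "prime CHAR('a)"
    by (simp add: finite_imp_CHAR_pos prime_CHAR_semidom)
  ultimately have "CHAR('a) dvd p" using prime_dvd_power by blast
  then show ?thesis using assms \<open>prime CHAR('a)\<close> by (simp add: primes_dvd_imp_eq)
qed


theorem mainTheorem6:
  fixes p e l n :: nat and a :: "'a::{finite,field}" and M :: "nat \<Rightarrow> nat \<Rightarrow> 'a"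
  assumes "prime p" and "e \<ge> 1" and "card (UNIV :: 'a set) = p ^ e" and "l \<le> e - 1"
    and "a \<noteq> 0"
    and "galois_etf p l n n M a 0 a"
  shows "(a = -1 \<longrightarrow> galois_self_dual p l (2 * n) (row_code n (2 * n) (gen0 n M)))
       \<and> (a \<noteq> -1 \<longrightarrow> galois_LCD p l (2 * n) (row_code n (2 * n) (gen0 n M)))"
proof -
  define P where "P = p ^ l"
  define C where "C = row_code n (2 * n) (gen0 n M)"
  have P0: "P > 0" using assms(1) by (simp add: P_def prime_gt_0_nat)
  have chr: "CHAR('a) = p" using char_is_p assms(1-3) by blast
  have fsum: "\<And>f :: nat \<Rightarrow> 'a. \<And>A. (sum f A) ^ P = (\<Sum>i\<in>A. f i ^ P)"
    unfolding P_def by (rule freshmans_dream_sum') (use chr assms(1) in auto)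
  have R: "\<forall>i<n. \<forall>k<n. (\<Sum>j<n. M i j * M k j ^ P) = (if i = k then a else 0)"
    using assms(6) unfolding galois_etf_def P_def by blast
  have N: "\<forall>j'<n. \<forall>j<n. (\<Sum>i<n. M i j' ^ P * M i j) = (if j' = j then a else 0)"
    using left_inv[OF assms(5) R] .
  have ipdef: "galois_ip p l (2*n) x y = (\<Sum>j<2*n. x j * y j ^ P)" for x y :: "nat \<Rightarrow> 'a"
    by (simp add: galois_ip_def P_def)
  have rowC: "gen0 n M k \<in> C" if "k < n" for k
  proof -
    have "gen0 n M k \<in> vecs (2*n)" by (simp add: vecs_def gen0_def)
    moreover have "gen0 n M k (n+j) = (\<Sum>i<n. gen0 n M k i * M i j)" if "j < n" for j
    proof -
      have "(\<Sum>i<n. gen0 n M k i * M i j) = (\<Sum>i<n. (if k = i then M i j else 0))"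
        by (rule sum.cong) (auto simp: gen0_def)
      also have "\<dots> = M k j" using \<open>k < n\<close> by simp
      finally show ?thesis using that by (simp add: gen0_def)
    qed
    ultimately show ?thesis unfolding C_def code_char by blast
  qed
  have orth: "x k + (\<Sum>j<n. x (n+j) * M k j ^ P) = 0" if "x \<in> galois_dual p l (2*n) C" "k < n" for x k
  proof -
    have "galois_ip p l (2*n) x (gen0 n M k) = 0" using that rowC unfolding galois_dual_def by blast
    then show ?thesis using ip_row[OF P0 \<open>k < n\<close>, of x M] by (simp add: ipdef)
  qed
  have zero_of: "x = (\<lambda>_. 0)" if "x \<in> vecs (2*n)" "\<forall>k<n. x k = 0" "\<forall>j<n. x (n+j) = 0" for x :: "nat \<Rightarrow> 'a"
  proof
    fix i show "x i = 0"
    proof (cases "i < n")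
      case True then show ?thesis using that by blast
    next
      case False
      show ?thesis
      proof (cases "i < 2*n")
        case True
        then obtain k where "i = n + k" "k < n" using False
          by (metis add_diff_inverse_nat mult_2 nat_add_left_cancel_less)
        then show ?thesis using that by blast
      next
        case False then show ?thesis using that(1) by (simp add: vecs_def)
      qed
    qed
  qed
  have key: "(\<Sum>j<n. (\<Sum>i<n. x i * M i j) * (\<Sum>k<n. y k * M k j) ^ P) = a * (\<Sum>i<n. x i * y i ^ P)"
    for x y :: "nat \<Rightarrow> 'a"
  proof -
    have "(\<Sum>j<n. (\<Sum>i<n. x i * M i j) * (\<Sum>k<n. y k * M k j) ^ P)
        = (\<Sum>j<n. \<Sum>i<n. \<Sum>k<n. x i * y k ^ P * (M i j * M k j ^ P))"
      by (simp add: fsum power_mult_distrib sum_distrib_left sum_distrib_right mult_ac)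
        (rule sum.cong[OF refl], rule sum.swap)
    also have "\<dots> = (\<Sum>i<n. \<Sum>j<n. \<Sum>k<n. x i * y k ^ P * (M i j * M k j ^ P))"
      by (rule sum.swap)
    also have "\<dots> = (\<Sum>i<n. \<Sum>k<n. \<Sum>j<n. x i * y k ^ P * (M i j * M k j ^ P))"
      by (rule sum.cong[OF refl], rule sum.swap)
    also have "\<dots> = (\<Sum>i<n. \<Sum>k<n. x i * y k ^ P * (\<Sum>j<n. M i j * M k j ^ P))"
      by (simp add: sum_distrib_left)
    also have "\<dots> = (\<Sum>i<n. \<Sum>k<n. x i * y k ^ P * (if i = k then a else 0))"
      using R by (auto intro!: sum.cong)
    also have "\<dots> = a * (\<Sum>i<n. x i * y i ^ P)"
      by (simp add: sum_distrib_left mult_ac if_distrib cong: if_cong)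
    finally show ?thesis .
  qed
  have part1: "galois_self_dual p l (2 * n) C" if am: "a = -1"
  proof -
    have "C \<subseteq> galois_dual p l (2*n) C"
    proof
      fix x assume x: "x \<in> C"
      have "galois_ip p l (2*n) x y = 0" if "y \<in> C" for y
      proof -
        have xc: "\<forall>j<n. x (n+j) = (\<Sum>i<n. x i * M i j)" using x unfolding C_def code_char by blast
        have yc: "\<forall>j<n. y (n+j) = (\<Sum>i<n. y i * M i j)" using that unfolding C_def code_char by blast
        have "galois_ip p l (2*n) x y = (\<Sum>j<n. x j * y j ^ P) + (\<Sum>j<n. x (n+j) * y (n+j) ^ P)"
          by (simp add: ipdef split_sum_2n')
        also have "(\<Sum>j<n. x (n+j) * y (n+j) ^ P) = (\<Sum>j<n. (\<Sum>i<n. x i * M i j) * (\<Sum>k<n. y k * M k j) ^ P)"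
          using xc yc by (auto intro!: sum.cong)
        finally show ?thesis using key[of x y] am by simp
      qed
      moreover have "x \<in> vecs (2*n)" using x unfolding C_def code_char by blast
      ultimately show "x \<in> galois_dual p l (2*n) C" unfolding galois_dual_def by blast
    qed
    moreover have "galois_dual p l (2*n) C \<subseteq> C"
    proof
      fix x assume x: "x \<in> galois_dual p l (2*n) C"
      have xv: "x \<in> vecs (2*n)" using x unfolding galois_dual_def by blast
      have xk: "x k = - (\<Sum>j'<n. x (n+j') * M k j' ^ P)" if "k < n" for k
        using orth[OF x that] by (simp add: eq_neg_iff_add_eq_0)
      have "x (n+j) = (\<Sum>i<n. x i * M i j)" if j: "j < n" for j
      proof -
        have "(\<Sum>i<n. x i * M i j) = (\<Sum>i<n. - (\<Sum>j'<n. x (n+j') * M i j' ^ P) * M i j)"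
          using xk by (auto intro!: sum.cong)
        also have "\<dots> = - (\<Sum>i<n. \<Sum>j'<n. x (n+j') * (M i j' ^ P * M i j))"
          by (simp add: sum_distrib_left sum_distrib_right sum_negf mult_ac)
        also have "\<dots> = - (\<Sum>j'<n. \<Sum>i<n. x (n+j') * (M i j' ^ P * M i j))"
          by (subst sum.swap, rule refl)
        also have "\<dots> = - (\<Sum>j'<n. x (n+j') * (\<Sum>i<n. M i j' ^ P * M i j))"
          by (simp add: sum_distrib_left)
        also have "\<dots> = - (\<Sum>j'<n. x (n+j') * (if j' = j then a else 0))"
          using N j by (auto intro!: sum.cong)
        also have "\<dots> = x (n+j)" using j am by (simp add: if_distrib cong: if_cong)
        finally show ?thesis by simp
      qed
      then show "x \<in> C" unfolding C_def code_char using xv by blast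
    qed
    ultimately show ?thesis unfolding galois_self_dual_def by blast
  qed
  have part2: "galois_LCD p l (2 * n) C" if am: "a \<noteq> -1"
  proof -
    have "x = (\<lambda>_. 0)" if x: "x \<in> C \<inter> galois_dual p l (2*n) C" for x
    proof -
      have xc: "\<forall>j<n. x (n+j) = (\<Sum>i<n. x i * M i j)" and xv: "x \<in> vecs (2*n)"
        using x unfolding C_def Int_iff code_char by blast+
      have xk0: "x k = 0" if k: "k < n" for k
      proof -
        have "0 = x k + (\<Sum>j<n. x (n+j) * M k j ^ P)" using orth x k by auto
        also have "(\<Sum>j<n. x (n+j) * M k j ^ P) = (\<Sum>j<n. \<Sum>i<n. x i * (M i j * M k j ^ P))"
          using xc by (auto simp: sum_distrib_left sum_distrib_right mult_ac intro!: sum.cong)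
        also have "\<dots> = (\<Sum>i<n. \<Sum>j<n. x i * (M i j * M k j ^ P))"
          by (rule sum.swap)
        also have "\<dots> = (\<Sum>i<n. x i * (\<Sum>j<n. M i j * M k j ^ P))"
          by (simp add: sum_distrib_left)
        also have "\<dots> = (\<Sum>i<n. x i * (if i = k then a else 0))"
          using R k by (auto intro!: sum.cong)
        also have "\<dots> = x k * a" using k by (simp add: if_distrib cong: if_cong)
        finally have "(1 + a) * x k = 0" by (simp add: algebra_simps)
        moreover have "1 + a \<noteq> 0" using am by (metis add.commute add_eq_0_iff)
        ultimately show ?thesis by simp
      qed
      have "\<forall>j<n. x (n+j) = 0" using xc xk0 by simp
      then show ?thesis using zero_of xv xk0 by blast
    qed
    moreover have "(\<lambda>_. 0) \<in> C \<inter> galois_dual p l (2*n) C"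
      using P0 by (auto simp: C_def code_char vecs_def galois_dual_def galois_ip_def)
    ultimately show ?thesis unfolding galois_LCD_def by blast
  qed
  show ?thesis using part1 part2 unfolding C_def by blast
qed

end
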